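(* Let $k\in\mathbb{Z}$ and $z\in\mathbb{C}$ with $|z|\ge \left(\tfrac12+(2|k|+1)\pi\right)e^{-1/2}$ (in particular, this holds whenever $|z|\ge 4(|k|+1)$). Then $|W_k'(z)|\le \frac{1}{|z|}$.
   Context: $W_k$ denotes the $k$-th branch of the Lambert $W$ function (inverse of $w\mapsto we^w$) in the standard convention of Corless, Gonnet, Hare, Jeffrey and Knuth (1996). On a branch cut, values are defined by continuity from the upper half plane and $W_k'$ denotes the derivative of the fixed branch $W_k$ (directional derivative along the cut there). *)

theory Defs
  imports "HOL-Analysis.Analysis"
begin

text \<open>Branches of the Lambert W function, following Corless--Gonnet--Hare--Jeffrey--Knuth.
  The range of branch k is described via the quantity Im w + Arg w (Arg with values in
  (-pi, pi]): the boundaries of the Corless ranges are exactly the curves where this quantity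
  is an odd multiple of pi. Boundaries are attached so that each branch is continuous from
  the upper half plane on its cut (counter-clockwise continuity). The real segment
  (-inf,-1] belongs to branch -1 (W_{-1} is real on [-1/e,0)), w = -1 lies in both
  ranges of branches 0 and -1.\<close>

definition lambert_range :: "int \<Rightarrow> complex set" where
  "lambert_range k =
     (if k = 0 then
        {w. - pi < Im w + Arg w \<and> Im w + Arg w \<le> pi} - {w. Im w = 0 \<and> Re w < -1}
      else if k = -1 then
        {w. - 3 * pi < Im w + Arg w \<and> Im w + Arg w \<le> - pi} \<union> {w. Im w = 0 \<and> Re w \<le> -1}
      else
        {w. (2 * of_int k - 1) * pi < Im w + Arg w \<and> Im w + Arg w \<le> (2 * of_int k + 1) * pi})"

definition Lambert_W :: "int \<Rightarrow> complex \<Rightarrow> complex" where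
  "Lambert_W k z = (THE w. w * exp w = z \<and> w \<in> lambert_range k)"

definition lambert_cut :: "int \<Rightarrow> complex set" where
  "lambert_cut k =
     (if k = 0 then {z. Im z = 0 \<and> Re z \<le> - exp (-1)} else {z. Im z = 0 \<and> Re z \<le> 0})"

text \<open>D is the derivative W_k'(z) of the fixed branch W_k at z: the complex derivative off the
  cut, the directional derivative along the cut on the cut.\<close>

definition Lambert_W_has_deriv :: "int \<Rightarrow> complex \<Rightarrow> complex \<Rightarrow> bool" where
  "Lambert_W_has_deriv k z D \<longleftrightarrow>
     (Lambert_W k has_field_derivative D)
        (at z within (if z \<in> lambert_cut k then lambert_cut k else UNIV))"

end

theory Submission
  imports Defs "HOL-Complex_Analysis.Complex_Analysis"
begin


lemma inj_convex_Re_pos: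
  fixes h h' :: "complex \<Rightarrow> complex"
  assumes C: "convex C"
    and der: "\<And>w. w \<in> C \<Longrightarrow> (h has_field_derivative h' w) (at w)"
    and pos: "\<And>w. w \<in> C \<Longrightarrow> Re (h' w) > 0"
    and ab: "a \<in> C" "b \<in> C" "h a = h b"
  shows "a = b"
proof (rule ccontr)
  assume ne: "a \<noteq> b"
  define d where "d = b - a"
  have d0: "d \<noteq> 0" using ne by (simp add: d_def)
  define q where "q t = Re (h (a + of_real t * d) / d)" for t
  have inC: "a + of_real t * d \<in> C" if "0 \<le> t" "t \<le> 1" for t
  proof -
    have "(1 - t) *\<^sub>R a + t *\<^sub>R b \<in> C"
      using convexD[OF C ab(1) ab(2), of "1-t" t] that by simp
    moreover have "(1 - t) *\<^sub>R a + t *\<^sub>R b = a + of_real t * d"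
      by (simp add: d_def scaleR_conv_of_real algebra_simps)
    ultimately show ?thesis by simp
  qed
  have D: "(q has_real_derivative Re (h' (a + of_real t * d))) (at t)" if "0 \<le> t" "t \<le> 1" for t
  proof -
    have l: "((\<lambda>s. a + s * d) has_field_derivative d) (at (of_real t))"
      by (auto intro!: derivative_eq_intros)
    have "((\<lambda>s. h (a + s * d)) has_field_derivative (h' (a + of_real t * d) * d)) (at (of_real t))"
      using DERIV_chain2[of h "h' (a + of_real t * d)" "\<lambda>s. a + s * d", OF _ l] der[OF inC[OF that]] by simp
    hence "((\<lambda>s. h (a + s * d) / d) has_field_derivative (h' (a + of_real t * d) * d / d)) (at (of_real t))"
      by (rule DERIV_cdivide)
    hence "((\<lambda>s. h (a + s * d) / d) has_field_derivative (h' (a + of_real t * d))) (at (of_real t))"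
      using d0 by simp
    from has_vector_derivative_real_field[OF this, of UNIV]
    have "((\<lambda>x. h (a + of_real x * d) / d) has_vector_derivative h' (a + complex_of_real t * d)) (at t)"
      by simp
    from has_field_derivative_Re[OF this] show ?thesis unfolding q_def by simp
  qed
  obtain t where t: "0 < t" "t < 1" "q 1 - q 0 = (1 - 0) * Re (h' (a + of_real t * d))"
    using MVT2[of 0 1 q "\<lambda>t. Re (h' (a + of_real t * d))"] D by auto
  have "q 1 = q 0" unfolding q_def using ab(3) by (simp add: d_def)
  with t pos[OF inC[of t]] show False by simp
qed

definition hh :: "complex \<Rightarrow> complex" where "hh w = Ln w + w"
definition ff :: "complex \<Rightarrow> real" where "ff w = Im w + Arg w"
definition DD :: "complex set" where
  "DD = {w. Re w > 0} \<union> {w. Re w > -1/2 \<and> Im w > 1/2} \<union> {w. Re w > -1/2 \<and> Im w < -1/2}"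

lemma Arg_up: "Re w \<le> 0 \<Longrightarrow> Im w > 0 \<Longrightarrow> Arg w \<ge> pi/2"
  using Arg_Re_pos[of w] Arg_less_0[of w] by auto

lemma Arg_down: "Re w \<le> 0 \<Longrightarrow> Im w < 0 \<Longrightarrow> Arg w \<le> - pi/2"
  using Arg_Re_pos[of w] Arg_neg_iff[of w] by auto

lemma Arg_right: "Re w > 0 \<Longrightarrow> \<bar>Arg w\<bar> < pi/2"
  using Arg_Re_pos[of w] by auto

lemma DD_nonpos: "w \<in> DD \<Longrightarrow> w \<notin> \<real>\<^sub>\<le>\<^sub>0"
  by (auto simp: DD_def complex_nonpos_Reals_iff)

lemma open_DD: "open DD"
  unfolding DD_def
  by (intro open_Un open_Collect_conj open_halfspace_Re_gt open_halfspace_Im_gt open_halfspace_Im_lt)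

lemma hh_deriv: "w \<notin> \<real>\<^sub>\<le>\<^sub>0 \<Longrightarrow> (hh has_field_derivative (inverse w + 1)) (at w)"
  unfolding hh_def[abs_def]
  by (auto intro!: derivative_eq_intros has_field_derivative_Ln)

lemma Im_hh: "w \<noteq> 0 \<Longrightarrow> Im (hh w) = ff w"
  by (simp add: hh_def ff_def Ln_Arg)

lemma Re_inv_plus1:
  assumes "Re w > -1/2" "\<bar>Im w\<bar> > 1/2 \<or> Re w > 0"
  shows "Re (inverse w + 1) > 0"
proof -
  have w0: "w \<noteq> 0" using assms by auto
  have p: "(Re w)^2 + (Im w)^2 > 0" using w0
    by (simp add: complex_eq_iff sum_power2_gt_zero_iff)
  have "Re w + ((Re w)^2 + (Im w)^2) > 0"
  proof (cases "Re w > 0")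
    case True then show ?thesis using p by linarith
  next
    case False
    with assms have "\<bar>Im w\<bar> > 1/2" by auto
    hence "1/2 * (1/2) < \<bar>Im w\<bar> * \<bar>Im w\<bar>"
      by (intro mult_strict_mono) auto
    hence "(Im w)^2 > 1/4"
      by (simp add: power2_eq_square)
    moreover have "(Re w + 1/2)^2 \<ge> 0" by simp
    ultimately show ?thesis by (simp add: power2_eq_square algebra_simps) 
  qed
  hence "Re w / ((Re w)^2 + (Im w)^2) > -1" using p
    by (simp add: field_simps)
  thus ?thesis by simp
qed

lemma inj_hh: "inj_on hh DD"
proof (rule inj_onI)
  fix a b assume a: "a \<in> DD" and b: "b \<in> DD" and e: "hh a = hh b"
  define H0 where "H0 = {w. Re w > 0}"
  define QP where "QP = {w. Re w > -1/2 \<and> Im w > 1/2}"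
  define QM where "QM = {w. Re w > -1/2 \<and> Im w < -1/2}"
  have e1: "QP = {w. Re w > -1/2} \<inter> {w. Im w > 1/2}" "QM = {w. Re w > -1/2} \<inter> {w. Im w < -1/2}"
    unfolding QP_def QM_def by auto
  have cv: "convex H0" "convex QP" "convex QM"
    unfolding H0_def e1
    by (rule convex_halfspace_Re_gt convex_Int[OF convex_halfspace_Re_gt convex_halfspace_Im_gt]
         convex_Int[OF convex_halfspace_Re_gt convex_halfspace_Im_lt])+
  have gen: "a = b" if "convex C" "C \<subseteq> DD" "a \<in> C" "b \<in> C" for C
  proof (rule inj_convex_Re_pos[OF that(1), of hh "\<lambda>w. inverse w + 1"])
    show "(hh has_field_derivative inverse w + 1) (at w)" if "w \<in> C" for w
      using hh_deriv DD_nonpos \<open>C \<subseteq> DD\<close> that by blast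
    show "0 < Re (inverse w + 1)" if "w \<in> C" for w
      using \<open>C \<subseteq> DD\<close> that by (intro Re_inv_plus1) (auto simp: DD_def)
  qed (use that e in auto)
  have sub: "H0 \<subseteq> DD" "QP \<subseteq> DD" "QM \<subseteq> DD" by (auto simp: H0_def QP_def QM_def DD_def)
  have a0: "a \<noteq> 0" "b \<noteq> 0" using a b by (auto simp: DD_def)
  have fe: "ff a = ff b" using Im_hh[OF a0(1)] Im_hh[OF a0(2)] e by simp
  have upf: "ff w > 1/2 + pi/2" if "Re w \<le> 0" "Im w > 1/2" for w
    using Arg_up[of w] that by (simp add: ff_def)
  have dnf: "ff w < -1/2 - pi/2" if "Re w \<le> 0" "Im w < -1/2" for w
    using Arg_down[of w] that by (simp add: ff_def)
  have midf: "\<bar>ff w\<bar> < 1/2 + pi/2" if "Re w > 0" "\<bar>Im w\<bar> \<le> 1/2" for w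
    using Arg_right[of w] that by (simp add: ff_def)
  have posf: "ff w > 0" if "Im w > 1/2" for w
    using Arg_less_0[of w] that by (simp add: ff_def)
  have negf: "ff w < 0" if "Im w < -1/2" for w
    using Arg_neg_iff[of w] that by (simp add: ff_def)
  have ar: "Re a > 0 \<or> (Re a > -1/2 \<and> Im a > 1/2) \<or> (Re a > -1/2 \<and> Im a < -1/2)"
    using a unfolding DD_def by blast
  have br: "Re b > 0 \<or> (Re b > -1/2 \<and> Im b > 1/2) \<or> (Re b > -1/2 \<and> Im b < -1/2)"
    using b unfolding DD_def by blast
  have dj: "(Re a > 0 \<and> Re b > 0) \<or> ((Re a > -1/2 \<and> Im a > 1/2) \<and> (Re b > -1/2 \<and> Im b > 1/2))
     \<or> ((Re a > -1/2 \<and> Im a < -1/2) \<and> (Re b > -1/2 \<and> Im b < -1/2))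
     \<or> ((Re a > -1/2 \<and> Im a > 1/2) \<and> (Re b > -1/2 \<and> Im b < -1/2))
     \<or> ((Re a > -1/2 \<and> Im a < -1/2) \<and> (Re b > -1/2 \<and> Im b > 1/2))
     \<or> (Re a \<le> 0 \<and> Im a > 1/2 \<and> Re b > 0 \<and> \<bar>Im b\<bar> \<le> 1/2)
     \<or> (Re a \<le> 0 \<and> Im a < -1/2 \<and> Re b > 0 \<and> \<bar>Im b\<bar> \<le> 1/2)
     \<or> (Re b \<le> 0 \<and> Im b > 1/2 \<and> Re a > 0 \<and> \<bar>Im a\<bar> \<le> 1/2)
     \<or> (Re b \<le> 0 \<and> Im b < -1/2 \<and> Re a > 0 \<and> \<bar>Im a\<bar> \<le> 1/2)"
    using ar br unfolding abs_le_iff by (elim disjE conjE; simp; linarith)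
  from dj show "a = b"
  proof (elim disjE)
    assume h: "Re a > 0 \<and> Re b > 0" then show ?thesis using gen[OF cv(1) sub(1)] by (auto simp: H0_def)
  next
    assume h: "(Re a > -1/2 \<and> Im a > 1/2) \<and> (Re b > -1/2 \<and> Im b > 1/2)"
    then show ?thesis using gen[OF cv(2) sub(2)] by (auto simp: QP_def)
  next
    assume h: "(Re a > -1/2 \<and> Im a < -1/2) \<and> (Re b > -1/2 \<and> Im b < -1/2)"
    then show ?thesis using gen[OF cv(3) sub(3)] by (auto simp: QM_def)
  next
    assume h: "(Re a > -1/2 \<and> Im a > 1/2) \<and> (Re b > -1/2 \<and> Im b < -1/2)"
    then show ?thesis using posf[of a] negf[of b] fe by auto
  next
    assume h: "(Re a > -1/2 \<and> Im a < -1/2) \<and> (Re b > -1/2 \<and> Im b > 1/2)"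
    then show ?thesis using posf[of b] negf[of a] fe by auto
  next
    assume h: "Re a \<le> 0 \<and> Im a > 1/2 \<and> Re b > 0 \<and> \<bar>Im b\<bar> \<le> 1/2"
    then show ?thesis using upf[of a] midf[of b] fe by auto
  next
    assume h: "Re a \<le> 0 \<and> Im a < -1/2 \<and> Re b > 0 \<and> \<bar>Im b\<bar> \<le> 1/2"
    then show ?thesis using dnf[of a] midf[of b] fe by auto
  next
    assume h: "Re b \<le> 0 \<and> Im b > 1/2 \<and> Re a > 0 \<and> \<bar>Im a\<bar> \<le> 1/2"
    then show ?thesis using upf[of b] midf[of a] fe by auto
  next
    assume h: "Re b \<le> 0 \<and> Im b < -1/2 \<and> Re a > 0 \<and> \<bar>Im a\<bar> \<le> 1/2"
    then show ?thesis using dnf[of b] midf[of a] fe by auto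
  qed
qed

definition BB :: "int \<Rightarrow> real" where
  "BB k = (1/2 + (2 * \<bar>real_of_int k\<bar> + 1) * pi) * exp (- 1/2)"

lemma exp_half_le: "exp (1/2::real) \<le> 9/5"
proof -
  have "exp (1/2::real) * exp (1/2) = exp 1" by (simp flip: exp_add)
  also have "\<dots> \<le> 3" by (rule exp_le)
  finally have le: "exp (1/2::real) * exp (1/2) < 9/5 * (9/5)" by simp
  show ?thesis
  proof (rule ccontr)
    assume "\<not> ?thesis"
    hence "9/5 * (9/5) < exp (1/2::real) * exp (1/2)" by (intro mult_strict_mono) auto
    with le show False by simp
  qed
qed

lemma exp_mhalf_ge: "exp (- 1/2::real) \<ge> 5/9"
proof -
  have p: "exp (- 1/2::real) * exp (1/2) = 1" by (simp flip: exp_add)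
  show ?thesis
  proof (rule ccontr)
    assume "\<not> ?thesis"
    hence "exp (- 1/2::real) * exp (1/2) < 5/9 * (9/5)"
      by (intro mult_less_le_imp_less exp_half_le) auto
    with p show False by simp
  qed
qed

lemma exp_m1_le: "exp (-1::real) \<le> 1/2"
proof -
  have "2 \<le> exp (1::real)" using exp_ge_add_one_self[of 1] by simp
  have p: "exp (-1::real) * exp 1 = 1" by (simp flip: exp_add)
  show ?thesis
  proof (rule ccontr)
    assume "\<not> ?thesis"
    hence "1/2 * 2 < exp (-1::real) * exp 1"
      by (intro mult_less_le_imp_less) (use \<open>2 \<le> exp 1\<close> in auto)
    with p show False by simp
  qed
qed

lemma texp_le: "(t::real) * exp (- t) \<le> exp (-1)"
proof -
  have "t \<le> exp (t - 1)" using exp_ge_add_one_self[of "t - 1"] by simp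
  hence "t * exp (-t) \<le> exp (t - 1) * exp (-t)" by (intro mult_right_mono) auto
  also have "\<dots> = exp (-1)" by (simp flip: exp_add)
  finally show ?thesis .
qed

lemma BB_ge: "BB k \<ge> 2"
proof -
  have "(1/2 + pi) * (5/9) \<le> (1/2 + (2 * \<bar>real_of_int k\<bar> + 1) * pi) * exp (- 1/2)"
  proof (intro mult_mono exp_mhalf_ge)
    have "1 * pi \<le> (2 * \<bar>real_of_int k\<bar> + 1) * pi" by (intro mult_right_mono) auto
    thus "1/2 + pi \<le> 1/2 + (2 * \<bar>real_of_int k\<bar> + 1) * pi" by simp
    have "0 \<le> (2 * \<bar>real_of_int k\<bar> + 1) * pi" by simp
    thus "0 \<le> 1/2 + (2 * \<bar>real_of_int k\<bar> + 1) * pi" by linarith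
  qed simp_all
  moreover have "(1/2 + pi) * (5/9) \<ge> 2" using pi_approx by simp
  ultimately show ?thesis unfolding BB_def by linarith
qed

lemma norm_wexp: "norm (w * exp w) = norm w * exp (Re w)"
  by (simp add: norm_mult)

lemma range_ff:
  assumes w: "w \<in> lambert_range k" and nr: "\<not> (Im w = 0 \<and> Re w \<le> -1)"
  shows "(2 * of_int k - 1) * pi < ff w \<and> ff w \<le> (2 * of_int k + 1) * pi"
proof -
  consider "k = 0" | "k = -1" | "k \<noteq> 0 \<and> k \<noteq> -1" by blast
  then show ?thesis
  proof cases
    case 1
    with w have "- pi < Im w + Arg w \<and> Im w + Arg w \<le> pi" by (simp add: lambert_range_def)
    with 1 show ?thesis by (simp add: ff_def)
  next
    case 2
    with w have "w \<in> {w. - 3 * pi < Im w + Arg w \<and> Im w + Arg w \<le> - pi} \<union> {w. Im w = 0 \<and> Re w \<le> -1}"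
      by (simp add: lambert_range_def)
    with nr have "- 3 * pi < Im w + Arg w \<and> Im w + Arg w \<le> - pi" by blast
    with 2 show ?thesis by (simp add: ff_def)
  next
    case 3
    with w show ?thesis by (simp add: lambert_range_def ff_def)
  qed
qed



lemma sin_ge_xcos:
  assumes "0 \<le> a" "a \<le> pi" shows "a * cos a \<le> sin a"
proof -
  have "(\<lambda>t. sin t - t * cos t) 0 \<le> (\<lambda>t. sin t - t * cos t) a"
  proof (rule DERIV_nonneg_imp_nondecreasing[OF assms(1)])
    fix x assume x: "0 \<le> x" "x \<le> a"
    have "((\<lambda>t. sin t - t * cos t) has_real_derivative (x * sin x)) (at x)"
      by (auto intro!: derivative_eq_intros)
    moreover have "x * sin x \<ge> 0"
      using x assms sin_ge_zero[of x] by simp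
    ultimately show "\<exists>y. ((\<lambda>t. sin t - t * cos t) has_real_derivative y) (at x) \<and> 0 \<le> y" by blast
  qed
  thus ?thesis by simp
qed

definition rr :: "real \<Rightarrow> real \<Rightarrow> real" where "rr \<theta> \<phi> = (\<theta> - \<phi>) / sin \<phi>"
definition GG :: "real \<Rightarrow> real \<Rightarrow> real" where "GG \<theta> \<phi> = rr \<theta> \<phi> * exp (rr \<theta> \<phi> * cos \<phi>)"

lemma param_props:
  assumes "0 < \<phi>" "\<phi> < \<theta>" "\<phi> < pi"
  defines "w \<equiv> rcis (rr \<theta> \<phi>) \<phi>"
  shows "Im w > 0" "ff w = \<theta>" "w * exp w = of_real (GG \<theta> \<phi>) * cis \<theta>"
proof -
  have s: "sin \<phi> > 0" using assms sin_gt_zero by auto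
  have r: "rr \<theta> \<phi> > 0" using s assms by (simp add: rr_def)
  have im: "Im w = \<theta> - \<phi>" using s by (simp add: w_def rr_def)
  have re: "Re w = rr \<theta> \<phi> * cos \<phi>" by (simp add: w_def)
  show "Im w > 0" using im assms by simp
  have arg: "Arg w = \<phi>" unfolding w_def using assms r by (intro Arg_rcis) auto
  show "ff w = \<theta>" using im arg by (simp add: ff_def)
  have "w * exp w = rcis (rr \<theta> \<phi>) \<phi> * (exp (Re w) * cis (Im w))"
    by (simp add: w_def exp_eq_polar)
  also have "\<dots> = of_real (rr \<theta> \<phi> * exp (Re w)) * cis (\<phi> + Im w)"
    by (simp add: rcis_def cis_mult)
  also have "\<dots> = of_real (GG \<theta> \<phi>) * cis \<theta>" by (simp add: im re GG_def)
  finally show "w * exp w = of_real (GG \<theta> \<phi>) * cis \<theta>" .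
qed

lemma GG_cont: "0 < a \<Longrightarrow> b < pi \<Longrightarrow> continuous_on {a..b} (GG \<theta>)"
proof -
  assume ab: "0 < a" "b < pi"
  have "sin x \<noteq> 0" if "x \<in> {a..b}" for x using that ab sin_gt_zero[of x] by auto
  thus ?thesis unfolding GG_def[abs_def] rr_def by (intro continuous_intros) auto
qed

lemma GG_small:
  assumes "\<theta> > 0"
  obtains \<phi> where "0 < \<phi>" "\<phi> < \<theta>" "\<phi> < pi" "GG \<theta> \<phi> \<le> 2"
proof -
  consider "\<theta> \<le> pi/2" | "pi/2 < \<theta> \<and> \<theta> \<le> pi" | "\<theta> > pi" by linarith
  then show ?thesis
  proof cases
    case 1
    define a where "a = 2 * \<theta> / 3"
    have a: "0 < a" "a \<le> pi/3" "a < \<theta>" using 1 assms by (auto simp: a_def)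
    have s: "sin a > 0" using a sin_gt_zero[of a] pi_gt3 by auto
    have ca: "cos a \<ge> 1/2" using cos_monotone_0_pi_le[of a "pi/3"] a cos_60 by auto
    have sc: "a * cos a \<le> sin a" using a by (intro sin_ge_xcos) auto
    have rr: "rr \<theta> a = (a/2) / sin a" by (simp add: rr_def a_def)
    have r1: "rr \<theta> a \<le> 1"
    proof -
      have "a/2 \<le> a * cos a" using ca a by (simp add: field_simps)
      also have "\<dots> \<le> sin a" by (rule sc)
      finally show ?thesis using s by (simp add: rr)
    qed
    have x1: "rr \<theta> a * cos a \<le> 1/2"
    proof -
      have "(a/2) * cos a \<le> sin a / 2" using sc by simp
      thus ?thesis using s by (simp add: rr field_simps)
    qed
    have r0: "rr \<theta> a \<ge> 0" using s a by (simp add: rr)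
    have "GG \<theta> a \<le> 1 * exp (1/2)" unfolding GG_def
      by (intro mult_mono r1) (use x1 r0 in auto)
    also have "\<dots> \<le> 2" using exp_half_le by simp
    finally show ?thesis using that[of a] a pi_gt3 by auto
  next
    case 2
    have "GG \<theta> (pi/2) = \<theta> - pi/2" by (simp add: GG_def rr_def)
    also have "\<dots> \<le> 2" using 2 pi_approx by simp
    finally show ?thesis using that[of "pi/2"] 2 by auto
  next
    case 3
    define a where "a = 2 * pi / 3"
    have ca: "cos a = - 1/2"
    proof -
      have "a = pi - pi/3" by (simp add: a_def)
      hence "cos a = cos (pi - pi/3)" by (rule arg_cong)
      also have "\<dots> = - cos (pi/3)" by (rule cos_pi_minus)
      also have "\<dots> = - 1/2" by (simp add: cos_60)
      finally show ?thesis .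
    qed
    define t where "t = rr \<theta> a / 2"
    have "GG \<theta> a = 2 * (t * exp (- t))" by (simp add: GG_def ca t_def)
    also have "\<dots> \<le> 2 * exp (-1)" by (intro mult_left_mono texp_le) auto
    also have "\<dots> \<le> 2" using exp_m1_le by simp
    finally have g: "GG \<theta> a \<le> 2" .
    have "2 * pi / 3 < \<theta>" using 3 pi_gt3 by linarith
    moreover have "0 < 2 * pi / 3" "2 * pi / 3 < pi" using pi_gt3 by auto
    ultimately show ?thesis using that[of a] g unfolding a_def by blast
  qed
qed

lemma GG_big:
  assumes "\<theta> > 0" "\<rho> \<ge> 1"
  obtains \<phi> where "0 < \<phi>" "\<phi> < \<theta>" "\<phi> < pi" "GG \<theta> \<phi> \<ge> \<rho>"
proof -
  define a where "a = min (pi/3) (\<theta> / (4 * \<rho>))"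
  have a0: "0 < a" using assms by (simp add: a_def)
  have a1: "a \<le> pi/3" "a \<le> \<theta> / (4 * \<rho>)" by (auto simp: a_def)
  have "\<theta> / (4 * \<rho>) \<le> \<theta> / 4" using assms by (intro divide_left_mono) auto
  hence a2: "a \<le> \<theta>/4" using a1 by linarith
  have s: "sin a > 0" using a0 a1 sin_gt_zero[of a] pi_gt3 by auto
  have sa: "sin a \<le> a" using a0 sin_x_le_x by auto
  have ca: "cos a \<ge> 1/2" using cos_monotone_0_pi_le[of a "pi/3"] a0 a1 cos_60 by auto
  have "\<rho> \<le> \<theta> / (4 * a)" using a1 a0 assms by (simp add: field_simps)
  also have "\<dots> = (\<theta>/2) * (1/2) / a" by simp
  also have "\<dots> \<le> (\<theta> - a) * cos a / a"
    by (intro divide_right_mono mult_mono ca) (use a2 a0 assms in auto)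
  also have "\<dots> \<le> (\<theta> - a) * cos a / sin a"
    by (intro divide_left_mono sa) (use a2 a0 assms ca s in auto)
  also have "\<dots> = rr \<theta> a * cos a" by (simp add: rr_def)
  finally have x: "\<rho> \<le> rr \<theta> a * cos a" .
  have r0: "rr \<theta> a > 0" using s a2 assms by (simp add: rr_def)
  have "rr \<theta> a * cos a \<le> rr \<theta> a" using r0 by (simp add: mult_left_le)
  also have "\<dots> \<le> GG \<theta> a" unfolding GG_def using r0 x assms
    by (simp add: mult_le_cancel_left1)
  finally show ?thesis using that[of a] x a0 a2 a1 assms pi_gt3 by auto
qed

lemma exist_pos:
  assumes "\<theta> > 0" "\<rho> \<ge> 2"
  shows "\<exists>w. Im w > 0 \<and> ff w = \<theta> \<and> w * exp w = of_real \<rho> * cis \<theta>"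
proof -
  obtain p where p: "0 < p" "p < \<theta>" "p < pi" "GG \<theta> p \<le> 2" using GG_small assms by blast
  obtain q where q: "0 < q" "q < \<theta>" "q < pi" "GG \<theta> q \<ge> \<rho>" using GG_big[of \<theta> \<rho>] assms by auto
  have "\<exists>\<phi>. 0 < \<phi> \<and> \<phi> < \<theta> \<and> \<phi> < pi \<and> GG \<theta> \<phi> = \<rho>"
  proof (cases "p \<le> q")
    case True
    from IVT'[of "GG \<theta>" p \<rho> q] True p q assms GG_cont[of p q \<theta>]
    obtain x where "p \<le> x" "x \<le> q" "GG \<theta> x = \<rho>" by auto
    thus ?thesis using p q by (intro exI[of _ x]) auto
  next
    case False
    from IVT2'[of "GG \<theta>" p \<rho> q] False p q assms GG_cont[of q p \<theta>]
    obtain x where "q \<le> x" "x \<le> p" "GG \<theta> x = \<rho>" by auto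
    thus ?thesis using p q by (intro exI[of _ x]) auto
  qed
  then obtain \<phi> where "0 < \<phi>" "\<phi> < \<theta>" "\<phi> < pi" "GG \<theta> \<phi> = \<rho>" by blast
  with param_props[of \<phi> \<theta>] show ?thesis by metis
qed



lemma key_ff:
  assumes fr: "(2 * of_int k - 1) * pi < ff w \<and> ff w \<le> (2 * of_int k + 1) * pi"
    and big: "norm (w * exp w) \<ge> BB k - 1/4"
  shows "w \<in> DD"
proof -
  have B2: "BB k \<ge> 2" by (rule BB_ge)
  have fa: "\<bar>ff w\<bar> \<le> (2 * \<bar>real_of_int k\<bar> + 1) * pi"
  proof -
    define m where "m = pi * real_of_int k"
    have e1: "(2 * \<bar>real_of_int k\<bar> + 1) * pi = 2 * \<bar>m\<bar> + pi"
      unfolding m_def by (simp add: abs_mult algebra_simps)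
    have e2: "(2 * of_int k - 1) * pi = 2 * m - pi" "(2 * of_int k + 1) * pi = 2 * m + pi"
      unfolding m_def by (simp_all add: algebra_simps)
    have "2 * m - pi < ff w" "ff w \<le> 2 * m + pi" using fr unfolding e2 by auto
    hence "\<bar>ff w\<bar> \<le> 2 * \<bar>m\<bar> + pi" by arith
    thus ?thesis unfolding e1 .
  qed
  show "w \<in> DD"
  proof (rule ccontr)
    assume nD: "w \<notin> DD"
    hence x0: "Re w \<le> 0" and c: "Re w \<le> -1/2 \<or> \<bar>Im w\<bar> \<le> 1/2"
      by (auto simp: DD_def abs_le_iff)
    have nw: "norm w \<le> \<bar>Re w\<bar> + \<bar>Im w\<bar>" by (rule cmod_le)
    show False
    proof (cases "Re w \<le> -1/2")
      case True
      have yb: "\<bar>Im w\<bar> \<le> (2 * \<bar>real_of_int k\<bar> + 1) * pi - pi/2"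
      proof -
        consider "Im w > 0" | "Im w < 0" | "Im w = 0" by linarith
        then show ?thesis
        proof cases
          case 1 then show ?thesis using Arg_up[of w] x0 fa by (simp add: ff_def)
        next
          case 2 then show ?thesis using Arg_down[of w] x0 fa by (simp add: ff_def)
        next
          case 3 then show ?thesis using pi_gt3 by (simp add: algebra_simps)
        qed
      qed
      have e1: "exp (Re w) \<le> exp (-1/2)" using True by simp
      have "norm (w * exp w) \<le> (\<bar>Re w\<bar> + \<bar>Im w\<bar>) * exp (Re w)"
        unfolding norm_wexp by (intro mult_right_mono nw) auto
      also have "\<dots> = (- Re w) * exp (- (- Re w)) + \<bar>Im w\<bar> * exp (Re w)"
        using x0 by (simp add: algebra_simps)
      also have "\<dots> \<le> exp (-1) + ((2 * \<bar>real_of_int k\<bar> + 1) * pi - pi/2) * exp (-1/2)"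
        by (intro add_mono texp_le mult_mono yb e1) auto
      finally have A: "norm (w * exp w) \<le> exp (-1) + ((2 * \<bar>real_of_int k\<bar> + 1) * pi - pi/2) * exp (-1/2)" .
      have "(1/2 + pi/2) * (5/9) \<le> (1/2 + pi/2) * exp (-1/2)"
        by (intro mult_left_mono) (use exp_mhalf_ge pi_gt3 in auto)
      moreover have "(1/2 + pi/2) * (5/9) > 3/4" using pi_gt3 by simp
      moreover have "BB k = ((2 * \<bar>real_of_int k\<bar> + 1) * pi - pi/2) * exp (-1/2) + (1/2 + pi/2) * exp (-1/2)"
        unfolding BB_def by (simp add: algebra_simps)
      ultimately have "exp (-1) + ((2 * \<bar>real_of_int k\<bar> + 1) * pi - pi/2) * exp (-1/2) < BB k - 1/4"
        using exp_m1_le by linarith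
      with A big show False by linarith
    next
      case False
      with c have "\<bar>Im w\<bar> \<le> 1/2" by auto
      hence "norm w \<le> 1" using nw False x0 by linarith
      moreover have "exp (Re w) \<le> 1" using x0 by simp
      ultimately have "norm (w * exp w) \<le> 1" unfolding norm_wexp
        by (intro mult_le_one) auto
      with big B2 show False by linarith
    qed
  qed
qed


lemma key:
  assumes w: "w \<in> lambert_range k" and big: "norm (w * exp w) \<ge> BB k - 1/4"
  shows "w \<in> DD \<and> (2 * of_int k - 1) * pi < ff w \<and> ff w \<le> (2 * of_int k + 1) * pi"
proof -
  have B2: "BB k \<ge> 2" by (rule BB_ge)
  have nr: "\<not> (Im w = 0 \<and> Re w \<le> -1)"
  proof
    assume h: "Im w = 0 \<and> Re w \<le> -1"
    hence "norm w = - Re w" by (simp add: cmod_def)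
    hence "norm (w * exp w) = (- Re w) * exp (- (- Re w))" by (simp add: norm_wexp)
    also have "\<dots> \<le> exp (-1)" by (rule texp_le)
    also have "\<dots> \<le> 1/2" by (rule exp_m1_le)
    finally show False using big B2 by linarith
  qed
  have fr: "(2 * of_int k - 1) * pi < ff w \<and> ff w \<le> (2 * of_int k + 1) * pi"
    by (rule range_ff[OF w nr])
  with key_ff[OF fr big] show ?thesis by blast
qed


lemma in_range:
  assumes D: "w \<in> DD" and fr: "(2 * of_int k - 1) * pi < ff w" "ff w \<le> (2 * of_int k + 1) * pi"
  shows "w \<in> lambert_range k"
proof -
  have nr: "\<not> (Im w = 0 \<and> Re w < -1)" using D by (auto simp: DD_def)
  consider "k = 0" | "k = -1" | "k \<noteq> 0 \<and> k \<noteq> -1" by blast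
  then show ?thesis
  proof cases
    case 1 then show ?thesis using fr nr by (simp add: lambert_range_def ff_def)
  next
    case 2 then show ?thesis using fr by (simp add: lambert_range_def ff_def)
  next
    case 3 then show ?thesis using fr by (simp add: lambert_range_def ff_def)
  qed
qed

lemma n_zero:
  fixes n :: int
  assumes "(2 * of_int k - 1) * pi < a" "a \<le> (2 * of_int k + 1) * pi"
    "(2 * of_int k - 1) * pi < b" "b \<le> (2 * of_int k + 1) * pi" "a = b + of_int (2 * n) * pi"
  shows "n = 0"
proof -
  have e: "(2 * of_int k + 1) * pi - (2 * of_int k - 1) * pi = 2 * pi" by (simp add: algebra_simps)
  have d: "a - b = real_of_int n * (2 * pi)" using assms(5) by simp
  have lt: "a - b < 2 * pi" "- (2 * pi) < a - b" using assms(1-4) e by linarith+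
  have n1: "real_of_int n < 1"
  proof (rule ccontr)
    assume "\<not> ?thesis"
    hence "1 * (2 * pi) \<le> real_of_int n * (2 * pi)" by (intro mult_right_mono) auto
    with d lt show False by linarith
  qed
  have n2: "-1 < real_of_int n"
  proof (rule ccontr)
    assume "\<not> ?thesis"
    hence "real_of_int n * (2 * pi) \<le> (-1) * (2 * pi)" by (intro mult_right_mono) auto
    with d lt show False by linarith
  qed
  from n1 n2 show ?thesis by linarith
qed

lemma exp_hh: "w \<noteq> 0 \<Longrightarrow> exp (hh w) = w * exp w"
  by (simp add: hh_def exp_add)

lemma hh_holo: "hh holomorphic_on DD"
  using hh_deriv DD_nonpos by (subst holomorphic_on_open[OF open_DD]) blast

lemma norm_le_1plus: "Re w > -1/2 \<Longrightarrow> norm w \<le> norm (1 + w)"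
  unfolding cmod_def by (intro real_sqrt_le_mono) (simp add: power2_eq_square algebra_simps)

lemma cis_2kpi: "cis (2 * of_int k * pi) = 1"
proof -
  have "cis (2 * pi * real_of_int k) = 1" by (rule cis_multiple_2pi) simp
  thus ?thesis by (simp add: mult.commute mult.left_commute)
qed

lemma exist_w0:
  assumes z2: "norm z \<ge> 2"
  shows "\<exists>w. ff w = Arg z + 2 * of_int k * pi \<and> w * exp w = z"
proof -
  define \<theta> where "\<theta> = Arg z + 2 * of_int k * pi"
  have zp: "z = of_real (norm z) * cis \<theta>"
  proof -
    have "cis \<theta> = cis (Arg z) * cis (2 * of_int k * pi)" by (simp add: \<theta>_def cis_mult)
    also have "\<dots> = cis (Arg z)" by (simp add: cis_2kpi)
    finally have "of_real (norm z) * cis \<theta> = rcis (norm z) (Arg z)" by (simp add: rcis_def)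
    thus ?thesis by (simp add: rcis_cmod_Arg)
  qed
  consider "\<theta> > 0" | "\<theta> < 0" | "\<theta> = 0" by linarith
  then have "\<exists>w. ff w = \<theta> \<and> w * exp w = z"
  proof cases
    case 1
    from exist_pos[OF 1 z2] obtain w where "ff w = \<theta>" "w * exp w = of_real (norm z) * cis \<theta>" by blast
    thus ?thesis using zp by metis
  next
    case 2
    hence "- \<theta> > 0" by simp
    from exist_pos[OF this z2] obtain w where w: "Im w > 0" "ff w = - \<theta>"
      "w * exp w = of_real (norm z) * cis (- \<theta>)" by blast
    have nR: "w \<notin> \<real>" using w(1) by (auto simp: complex_is_Real_iff)
    have "ff (cnj w) = \<theta>" using w(2) nR by (simp add: ff_def Arg_cnj)
    moreover have "cnj w * exp (cnj w) = cnj (w * exp w)" by (simp add: exp_cnj)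
    moreover have "cnj (of_real (norm z) * cis (- \<theta>)) = of_real (norm z) * cis \<theta>"
      by (simp add: cis_cnj)
    ultimately show ?thesis using w(3) zp by metis
  next
    case 3
    have "\<exists>t\<ge>0. t \<le> norm z \<and> t * exp t = norm z"
    proof (rule IVT')
      show "0 * exp 0 \<le> norm z" by simp
      have "norm z * 1 \<le> norm z * exp (norm z)" by (intro mult_left_mono) auto
      thus "norm z \<le> norm z * exp (norm z)" by simp
      show "continuous_on {0..norm z} (\<lambda>t. t * exp t)" by (intro continuous_intros)
    qed simp
    then obtain t where t: "t \<ge> 0" "t * exp t = norm z" by blast
    have "ff (of_real t) = \<theta>" using t 3 by (simp add: ff_def)
    moreover have "of_real t * exp (of_real t) = z"
    proof -
      have "of_real t * exp (of_real t) = of_real (t * exp t)" by (simp add: exp_of_real)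
      also have "\<dots> = of_real (norm z) * cis \<theta>" using t 3 by simp
      finally show ?thesis using zp by simp
    qed
    ultimately show ?thesis by blast
  qed
  thus ?thesis by (simp add: \<theta>_def)
qed


lemma Ln_minus_deriv: "- z \<notin> \<real>\<^sub>\<le>\<^sub>0 \<Longrightarrow> ((\<lambda>u. Ln (- u)) has_field_derivative inverse z) (at z)"
proof -
  assume h: "- z \<notin> \<real>\<^sub>\<le>\<^sub>0"
  have "((\<lambda>u. Ln (- u)) has_field_derivative inverse (- z) * (- 1)) (at z)"
    by (rule DERIV_chain2[of Ln _ "\<lambda>u. - u", OF has_field_derivative_Ln[OF h]]) (auto intro!: derivative_eq_intros)
  thus ?thesis by (simp add: inverse_minus_eq)
qed

theorem theorem5:
  fixes k :: int and z :: complex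
  assumes "norm z \<ge> (1/2 + (2 * \<bar>real_of_int k\<bar> + 1) * pi) * exp (- 1/2)"
  shows "\<exists>D. Lambert_W_has_deriv k z D \<and> norm D \<le> 1 / norm z"
proof -
  have zB: "norm z \<ge> BB k" using assms by (simp add: BB_def)
  have z2: "norm z \<ge> 2" using zB BB_ge[of k] by linarith
  have z0: "z \<noteq> 0" using z2 by auto
  define \<theta> where "\<theta> = Arg z + 2 * of_int k * pi"
  have \<theta>r: "(2 * of_int k - 1) * pi < \<theta>" "\<theta> \<le> (2 * of_int k + 1) * pi"
    using mpi_less_Arg[of z] Arg_le_pi[of z] by (simp_all add: \<theta>_def algebra_simps)
  obtain w0 where w0: "ff w0 = \<theta>" "w0 * exp w0 = z" using exist_w0[OF z2, of k] \<theta>_def by blast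
  have Dw0: "w0 \<in> DD" using key_ff[of k w0] \<theta>r w0 zB by auto
  have re0: "Re w0 > -1/2" using Dw0 by (auto simp: DD_def)
  have w00: "w0 \<noteq> 0" using Dw0 by (auto simp: DD_def)
  define zc where "zc \<longleftrightarrow> Im z = 0 \<and> Re z < 0"
  have nzR: "Im z = 0 \<Longrightarrow> norm z = \<bar>Re z\<bar>" by (simp add: cmod_def)
  have cut_iff: "z \<in> lambert_cut k \<longleftrightarrow> zc"
  proof
    assume "z \<in> lambert_cut k"
    hence h: "Im z = 0 \<and> Re z \<le> - exp (-1) \<or> Im z = 0 \<and> Re z \<le> 0"
      by (auto simp: lambert_cut_def split: if_splits)
    have "0 \<le> exp (-1::real)" by simp
    hence "Im z = 0" "Re z \<le> 0" using h by linarith+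
    thus zc using z0 by (auto simp: zc_def complex_eq_iff)
  next
    assume zc
    hence "Im z = 0" "Re z \<le> - 2" using nzR z2 by (auto simp: zc_def)
    thus "z \<in> lambert_cut k" using exp_m1_le by (auto simp: lambert_cut_def)
  qed
  define S where "S = (if z \<in> lambert_cut k then lambert_cut k else UNIV)"
  have zS: "z \<in> S" by (simp add: S_def)
  define C1 where "C1 = complex_of_real ((2 * of_int k + 1) * pi) * \<i>"
  define C2 where "C2 = complex_of_real (2 * of_int k * pi) * \<i>"
  define c where "c = (if zc then (\<lambda>u. Ln (- u) + C1) else (\<lambda>u. Ln u + C2))"
  obtain \<epsilon> where \<epsilon>: "\<epsilon> > 0" "\<epsilon> \<le> 1/4"
    and ball: "\<And>u. dist u z < \<epsilon> \<Longrightarrow> (if zc then - u \<notin> \<real>\<^sub>\<le>\<^sub>0 else u \<notin> \<real>\<^sub>\<le>\<^sub>0)"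
  proof (cases zc)
    case True
    have "- u \<notin> \<real>\<^sub>\<le>\<^sub>0" if "dist u z < 1/4" for u
    proof -
      have "\<bar>Re u - Re z\<bar> \<le> norm (u - z)" using abs_Re_le_cmod[of "u - z"] by simp
      hence "Re u < Re z + 1/4" using that by (simp add: dist_norm)
      moreover have "Re z \<le> -2" using True nzR z2 by (auto simp: zc_def)
      ultimately have "Re (- u) > 0" by simp
      thus ?thesis by (auto simp: complex_nonpos_Reals_iff)
    qed
    thus ?thesis using that[of "1/4"] True by auto
  next
    case False
    have "z \<notin> \<real>\<^sub>\<le>\<^sub>0" using False z0 by (auto simp: complex_nonpos_Reals_iff zc_def complex_eq_iff)
    moreover have "open (- \<real>\<^sub>\<le>\<^sub>0 :: complex set)" by (simp add: open_Compl)
    ultimately obtain e where e: "e > 0" "ball z e \<subseteq> - \<real>\<^sub>\<le>\<^sub>0"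
      using open_contains_ball by blast
    have "u \<notin> \<real>\<^sub>\<le>\<^sub>0" if "dist u z < min e (1/4)" for u
    proof -
      have "u \<in> ball z e" using that by (simp add: dist_commute)
      thus ?thesis using e(2) by blast
    qed
    thus ?thesis using that[of "min e (1/4)"] False e by auto
  qed
  have cder: "(c has_field_derivative inverse z) (at z)"
  proof (cases zc)
    case True
    have "- z \<notin> \<real>\<^sub>\<le>\<^sub>0" using ball[of z] \<epsilon> True by auto
    from DERIV_add[OF Ln_minus_deriv[OF this] DERIV_const[of C1]] show ?thesis unfolding c_def using True
      by simp
  next
    case False
    have "z \<notin> \<real>\<^sub>\<le>\<^sub>0" using ball[of z] \<epsilon> False by auto
    from DERIV_add[OF has_field_derivative_Ln[OF this] DERIV_const[of C2]] show ?thesis unfolding c_def using False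
      by simp
  qed
  define Ohh where "Ohh = hh ` DD"
  have oO: "open Ohh" unfolding Ohh_def by (rule open_mapping_thm3[OF hh_holo open_DD inj_hh])
  obtain g where g: "g holomorphic_on Ohh" "\<And>w. w \<in> DD \<Longrightarrow> deriv hh w * deriv g (hh w) = 1"
      "\<And>w. w \<in> DD \<Longrightarrow> g (hh w) = w"
    using holomorphic_has_inverse[OF hh_holo open_DD inj_hh] unfolding Ohh_def by blast
  have cis1: "exp C1 = -1"
  proof -
    have "exp C1 = cis ((2 * of_int k + 1) * pi)" by (simp add: C1_def cis_conv_exp mult.commute)
    also have "\<dots> = cis (2 * of_int k * pi) * cis pi"
    proof -
      have e: "(2 * of_int k + 1) * pi = 2 * of_int k * pi + pi" by (simp add: algebra_simps)
      show ?thesis unfolding e by (rule cis_mult[symmetric])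
    qed
    also have "\<dots> = -1" by (simp add: cis_2kpi)
    finally show ?thesis .
  qed
  have cis2: "exp C2 = 1"
  proof -
    have "exp C2 = cis (2 * of_int k * pi)" by (simp add: C2_def cis_conv_exp mult.commute)
    thus ?thesis by (simp add: cis_2kpi)
  qed
  have cprops: "exp (c u) = u \<and> Im (c u) = (if zc then Arg (- u) + (2 * of_int k + 1) * pi else Arg u + 2 * of_int k * pi)
       \<and> Re (c u) = ln (norm u)"
    if "dist u z < \<epsilon>" for u
  proof -
    have b: "if zc then - u \<notin> \<real>\<^sub>\<le>\<^sub>0 else u \<notin> \<real>\<^sub>\<le>\<^sub>0" by (rule ball[OF that])
    show ?thesis
    proof (cases zc)
      case True
      with b have "- u \<noteq> 0" by auto
      hence "exp (c u) = (- u) * (-1)" using True cis1 by (simp add: c_def exp_add)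
      moreover have "Im (c u) = Arg (- u) + (2 * of_int k + 1) * pi"
        using True \<open>- u \<noteq> 0\<close> by (simp add: c_def C1_def Ln_Arg)
      moreover have "Re (c u) = ln (norm u)"
        using True \<open>- u \<noteq> 0\<close> by (simp add: c_def C1_def Ln_Arg)
      ultimately show ?thesis using True by simp
    next
      case False
      with b have "u \<noteq> 0" by auto
      hence "exp (c u) = u" using False cis2 by (simp add: c_def exp_add)
      moreover have "Im (c u) = Arg u + 2 * of_int k * pi"
        using False \<open>u \<noteq> 0\<close> by (simp add: c_def C2_def Ln_Arg)
      moreover have "Re (c u) = ln (norm u)"
        using False \<open>u \<noteq> 0\<close> by (simp add: c_def C2_def Ln_Arg)
      ultimately show ?thesis using False by simp
    qed
  qed
  have Imc_S: "Im (c u) = Arg u + 2 * of_int k * pi \<or> Im (c u) = (2 * of_int k + 1) * pi"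
    if "u \<in> S" "dist u z < \<epsilon>" for u
  proof (cases zc)
    case True
    have "u \<in> lambert_cut k" using that(1) True cut_iff by (simp add: S_def)
    hence "Im u = 0" by (auto simp: lambert_cut_def split: if_splits)
    moreover have "- u \<notin> \<real>\<^sub>\<le>\<^sub>0" using ball[OF that(2)] True by simp
    ultimately have "Arg (- u) = 0"
      by (auto simp: Arg_eq_0 complex_nonpos_Reals_iff complex_is_Real_iff)
    thus ?thesis using cprops[OF that(2)] True by simp
  next
    case False
    thus ?thesis using cprops[OF that(2)] by simp
  qed
  have czw: "c z = hh w0"
  proof (rule complex_eqI)
    have "Re (hh w0) = ln (norm w0) + Re w0" using w00 by (simp add: hh_def Ln_Arg)
    also have "\<dots> = ln (norm w0 * exp (Re w0))" using w00 by (simp add: ln_mult)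
    also have "\<dots> = ln (norm z)" using w0(2) norm_wexp[of w0] by simp
    finally show "Re (c z) = Re (hh w0)" using cprops[of z] \<epsilon> by simp
    have "Im (c z) = \<theta>"
    proof (cases zc)
      case True
      hence "Arg z = pi" by (simp add: Arg_eq_pi zc_def)
      moreover have "Arg (- z) = 0" using True by (auto simp: Arg_eq_0 zc_def complex_is_Real_iff)
      ultimately show ?thesis using cprops[of z] \<epsilon> True by (simp add: \<theta>_def algebra_simps)
    next
      case False
      thus ?thesis using cprops[of z] \<epsilon> by (simp add: \<theta>_def)
    qed
    thus "Im (c z) = Im (hh w0)" using Im_hh[OF w00] w0(1) by simp
  qed
  have czO: "c z \<in> Ohh" using czw Dw0 by (simp add: Ohh_def)
  have "eventually (\<lambda>u. c u \<in> Ohh) (at z)"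
    using topological_tendstoD[OF DERIV_isCont[OF cder, unfolded isCont_def] oO czO] .
  then obtain d where d: "d > 0" "\<And>u. u \<noteq> z \<Longrightarrow> dist u z < d \<Longrightarrow> c u \<in> Ohh"
    unfolding eventually_at by blast
  define \<delta> where "\<delta> = min d \<epsilon>"
  have \<delta>: "\<delta> > 0" using d \<epsilon> by (simp add: \<delta>_def)
  have main: "g (c u) = Lambert_W k u" if uS: "u \<in> S" and ud: "dist u z < \<delta>" for u
  proof -
    have ue: "dist u z < \<epsilon>" using ud by (simp add: \<delta>_def)
    have "c u \<in> Ohh" using d czO ud by (cases "u = z") (auto simp: \<delta>_def)
    then obtain v where v: "v \<in> DD" "c u = hh v" by (auto simp: Ohh_def)
    have v0: "v \<noteq> 0" using v by (auto simp: DD_def)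
    have gv: "g (c u) = v" using g(3)[OF v(1)] v(2) by simp
    have ve: "v * exp v = u" using exp_hh[OF v0] v(2) cprops[OF ue] by simp
    have ffv: "ff v = Im (c u)" using Im_hh[OF v0] v(2) by simp
    have ffr: "(2 * of_int k - 1) * pi < ff v \<and> ff v \<le> (2 * of_int k + 1) * pi"
      using Imc_S[OF uS ue] ffv mpi_less_Arg[of u] Arg_le_pi[of u] by (auto simp: algebra_simps)
    have vr: "v \<in> lambert_range k" using in_range[OF v(1)] ffr by blast
    have un: "norm u \<ge> BB k - 1/4"
    proof -
      have "norm z \<le> norm u + norm (z - u)" by (rule norm_triangle_sub)
      moreover have "norm (z - u) < 1/4" using ue \<epsilon> by (simp add: dist_norm norm_minus_commute)
      ultimately show ?thesis using zB by linarith
    qed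
    have "Lambert_W k u = v"
      unfolding Lambert_W_def
    proof (rule the_equality)
      show "v * exp v = u \<and> v \<in> lambert_range k" using ve vr by blast
      fix w' assume w': "w' * exp w' = u \<and> w' \<in> lambert_range k"
      have kw: "w' \<in> DD \<and> (2 * of_int k - 1) * pi < ff w' \<and> ff w' \<le> (2 * of_int k + 1) * pi"
        using key[of w' k] w' un by auto
      have w'0: "w' \<noteq> 0" using kw by (auto simp: DD_def)
      have "exp (hh w') = exp (hh v)" using exp_hh[OF w'0] exp_hh[OF v0] w' ve by simp
      then obtain n :: int where n: "hh w' = hh v + (of_int (2 * n) * pi) * \<i>"
        unfolding exp_eq by blast
      have "ff w' = ff v + of_int (2 * n) * pi"
        using arg_cong[OF n, of Im] Im_hh[OF w'0] Im_hh[OF v0] by simp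
      hence "n = 0" using n_zero[of k "ff w'" "ff v" n] kw ffr by blast
      with n have "hh w' = hh v" by simp
      thus "w' = v" using inj_hh kw v(1) by (auto dest: inj_onD)
    qed
    with gv show ?thesis by simp
  qed
  have gder: "(g has_field_derivative deriv g (c z)) (at (c z))"
    by (rule holomorphic_derivI[OF g(1) oO czO])
  have comp: "((\<lambda>u. g (c u)) has_field_derivative deriv g (c z) * inverse z) (at z within S)"
    by (rule DERIV_chain2[OF gder has_field_derivative_at_within[OF cder]])
  have LW: "(Lambert_W k has_field_derivative deriv g (c z) * inverse z) (at z within S)"
    by (rule has_field_derivative_transform_within[OF comp \<delta> zS main])
  have dh: "deriv hh w0 = inverse w0 + 1"
    by (rule DERIV_imp_deriv[OF hh_deriv[OF DD_nonpos[OF Dw0]]])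
  have dg: "deriv g (c z) = inverse (inverse w0 + 1)"
  proof -
    have p: "(inverse w0 + 1) * deriv g (hh w0) = 1" using g(2)[OF Dw0] dh by simp
    show ?thesis using inverse_unique[OF p] czw by simp
  qed
  have "inverse w0 + 1 = (1 + w0) / w0" using w00 by (simp add: field_simps)
  hence dg2: "deriv g (c z) = w0 / (1 + w0)" using dg by simp
  have "norm (w0 / (1 + w0)) \<le> 1"
  proof (cases "1 + w0 = 0")
    case True then show ?thesis by simp
  next
    case False
    then show ?thesis using norm_le_1plus[OF re0] by (simp add: norm_divide divide_le_eq_1)
  qed
  hence "norm (deriv g (c z) * inverse z) \<le> 1 / norm z"
    using z0 by (simp add: dg2 norm_mult norm_inverse divide_inverse mult_le_cancel_right1)
  moreover have "Lambert_W_has_deriv k z (deriv g (c z) * inverse z)"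
    using LW by (simp add: Lambert_W_has_deriv_def S_def)
  ultimately show ?thesis by blast
qed

end
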